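(* Let $x\in A$ with $x>1$, and let $y$ be the largest element of $A$ that is less than $x$. Let $n\ge 1$, let $P_x$ be the position of $\mathrm{AGG}(n,A)$ with one cell containing a tile of value $x$ and $n-1$ empty cells, and define $P_y$ similarly. Then $P_x$ is reachable in $\mathrm{AGG}(n,A)$ if and only if both of the following hold: (1) $P_y$ is reachable in $\mathrm{AGG}(n,A)$; (2) some position of total value exactly $x-y$ is reachable in $\mathrm{AGG}(n-1,A)$.
   Context: Let $A$ be a set of positive integers with $1\in A$ (the allowed tile values). For an integer $n\ge 0$, the abstract generalized 2048 game $\mathrm{AGG}(n,A)$ is played on $n$ indistinguishable cells. A position assigns to each cell either nothing (the cell is empty) or a tile carrying a value in $A$. The initial position has all cells empty. A step, which can be performed from any position having at least one empty cell, consists of: (i) placing a new tile of value $1$ into a chosen empty cell; then (ii) optionally choosing any collection of pairwise disjoint sets of nonempty cells such that the sum of the tile values in each chosen set belongs to $A$, and merging each chosen set into a single tile, whose value is that sum, placed in one cell of the set, the other cells of the set becoming empty. The game ends when, after a step, all cells are nonempty (no further step is then possible). A position is reachable if it can be obtained from the initial position by a finite sequence of steps. The total value of a position is the sum of the values of its tiles. ($\mathrm{AGG}(0,A)$ has only the empty position, of total value $0$.) *)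

theory Defs
  imports Main "HOL-Library.Multiset"
begin

text \<open>Cells are indistinguishable, so a position of AGG(n,A) is represented by the
multiset of values of its tiles (the number of empty cells is n minus its size).\<close>

text \<open>One step: place a tile of value 1 into an empty cell (requires size M < n), then
merge pairwise disjoint groups of tiles, each group's value sum lying in A.\<close>
definition agg_step :: "nat \<Rightarrow> nat set \<Rightarrow> nat multiset \<Rightarrow> nat multiset \<Rightarrow> bool" where
  "agg_step n A M M' \<longleftrightarrow>
     size M < n \<and>
     (\<exists>R Gs. M + {#1#} = R + sum_list Gs \<and>
             (\<forall>G\<in>set Gs. G \<noteq> {#} \<and> sum_mset G \<in> A) \<and>
             M' = R + mset (map sum_mset Gs))"

definition agg_reachable :: "nat \<Rightarrow> nat set \<Rightarrow> nat multiset \<Rightarrow> bool" where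
  "agg_reachable n A M \<longleftrightarrow> (agg_step n A)\<^sup>*\<^sup>* {#} M"

end

theory Submission imports Defs begin

definition cz :: "nat set \<Rightarrow> nat multiset \<Rightarrow> nat multiset \<Rightarrow> bool" where
  "cz A N N' \<longleftrightarrow> (\<exists>Gs. N = \<Sum>\<^sub># Gs \<and> (\<forall>G\<in>#Gs. G \<noteq> {#} \<and> (size G = 1 \<or> sum_mset G \<in> A))
      \<and> N' = image_mset sum_mset Gs)"

lemma sum_single_img: "\<Sum>\<^sub># (image_mset (\<lambda>x. {#x#}) R) = R"
  by (induction R) auto

lemma img_single_img: "image_mset sum_mset (image_mset (\<lambda>x. {#x#}) R) = (R::nat multiset)"
  by (induction R) auto

lemma sum_sum: "sum_mset (\<Sum>\<^sub># Gs) = sum_mset (image_mset sum_mset (Gs :: 'a::comm_monoid_add multiset multiset))"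
  by (induction Gs) auto

lemma img_sum_singles: "(\<forall>G\<in>#S. size G = 1) \<Longrightarrow> image_mset sum_mset S = \<Sum>\<^sub># (S :: nat multiset multiset)"
proof (induction S)
  case (add G S)
  then obtain a where "G = {#a#}" by (metis size_1_singleton_mset union_single_eq_member)
  with add show ?case by auto
qed auto

lemma cz_sum: "cz A N N' \<Longrightarrow> sum_mset N' = sum_mset N"
  unfolding cz_def using sum_sum by metis

lemma cz_refl: "cz A N N"
  unfolding cz_def
  by (rule exI[of _ "image_mset (\<lambda>x. {#x#}) N"]) (auto simp: sum_single_img img_single_img)

lemma cz_empty: "cz A {#} N' \<Longrightarrow> N' = {#}"
proof -
  assume "cz A {#} N'"
  then obtain Gs where g: "{#} = \<Sum>\<^sub># Gs" "\<forall>G\<in>#Gs. G \<noteq> {#}" "N' = image_mset sum_mset Gs"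
    unfolding cz_def by blast
  have "Gs = {#}"
  proof (rule ccontr)
    assume "Gs \<noteq> {#}"
    then obtain G where "G \<in># Gs" by blast
    then have "\<Sum>\<^sub># Gs = G + \<Sum>\<^sub># (Gs - {#G#})" by (metis sum_mset.remove)
    with g(1) have "G = {#}" by simp
    with g(2) \<open>G \<in># Gs\<close> show False by blast
  qed
  with g(3) show ?thesis by simp
qed

lemma step_cz: "agg_step n A M M' \<Longrightarrow> size M < n \<and> cz A (M + {#1#}) M'"
  unfolding agg_step_def cz_def
proof (elim conjE exE)
  fix R Gs assume h: "size M < n" "M + {#1#} = R + sum_list Gs"
    "\<forall>G\<in>set Gs. G \<noteq> {#} \<and> sum_mset G \<in> A" "M' = R + mset (map sum_mset Gs)"
  show "size M < n \<and> (\<exists>Gs. M + {#1#} = \<Sum>\<^sub># Gs \<and> (\<forall>G\<in>#Gs. G \<noteq> {#} \<and> (size G = 1 \<or> sum_mset G \<in> A)) \<and> M' = image_mset sum_mset Gs)"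
    using h
    by (intro conjI exI[of _ "image_mset (\<lambda>x. {#x#}) R + mset Gs"])
       (auto simp: sum_single_img img_single_img sum_mset_sum_list)
qed

lemma cz_step: "size M < n \<Longrightarrow> cz A (M + {#1#}) M' \<Longrightarrow> agg_step n A M M'"
proof -
  assume s: "size M < n" and c: "cz A (M + {#1#}) M'"
  then obtain Gs where g: "M + {#1#} = \<Sum>\<^sub># Gs" "\<forall>G\<in>#Gs. G \<noteq> {#} \<and> (size G = 1 \<or> sum_mset G \<in> A)"
    "M' = image_mset sum_mset Gs" unfolding cz_def by blast
  define S where "S = filter_mset (\<lambda>G. size G = 1) Gs"
  define Ot where "Ot = filter_mset (\<lambda>G. size G \<noteq> 1) Gs"
  obtain L where L: "mset L = Ot" using ex_mset by blast
  have GS: "Gs = S + Ot" unfolding S_def Ot_def by (metis multiset_partition)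
  have S1: "\<forall>G\<in>#S. size G = 1" unfolding S_def by auto
  have "M + {#1#} = \<Sum>\<^sub># S + sum_list L"
    using g(1) GS L by (simp add: sum_mset_sum_list[symmetric])
  moreover have "\<forall>G\<in>set L. G \<noteq> {#} \<and> sum_mset G \<in> A"
  proof
    fix G assume "G \<in> set L"
    then have "G \<in># Ot" using L by (metis set_mset_mset)
    then have "G \<in># Gs" "size G \<noteq> 1" unfolding Ot_def by auto
    then show "G \<noteq> {#} \<and> sum_mset G \<in> A" using g(2) by auto
  qed
  moreover have "M' = \<Sum>\<^sub># S + mset (map sum_mset L)"
    using g(3) GS L img_sum_singles[OF S1] by simp
  ultimately show ?thesis unfolding agg_step_def using s by blast
qed

lemma sub_mono_sum: "X1 \<subseteq># X \<Longrightarrow> \<Sum>\<^sub># X1 \<subseteq># \<Sum>\<^sub># (X :: nat multiset multiset)"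
  by (metis subset_mset.le_iff_add sum_mset.union mset_subset_eq_add_left)

lemma cz_sub: "cz A N N' \<Longrightarrow> N1' \<subseteq># N' \<Longrightarrow> \<exists>N1. N1 \<subseteq># N \<and> cz A N1 N1'"
proof -
  assume c: "cz A N N'" and s: "N1' \<subseteq># N'"
  then obtain Gs where g: "N = \<Sum>\<^sub># Gs" "\<forall>G\<in>#Gs. G \<noteq> {#} \<and> (size G = 1 \<or> sum_mset G \<in> A)"
    "N' = image_mset sum_mset Gs" unfolding cz_def by blast
  have "image_mset sum_mset Gs = N1' + (N' - N1')" using s g(3) by simp
  then obtain B C where bc: "Gs = B + C" "N1' = image_mset sum_mset B" by (metis image_mset_eq_plusD)
  have "\<Sum>\<^sub># B \<subseteq># N" using g(1) bc(1) by simp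
  moreover have "cz A (\<Sum>\<^sub># B) N1'" unfolding cz_def using bc g(2) by auto
  ultimately show ?thesis by blast
qed

lemma split_img: "image_mset f X = \<Sum>\<^sub># Hs \<Longrightarrow> \<exists>Ps. X = \<Sum>\<^sub># Ps \<and> image_mset (image_mset f) Ps = Hs"
proof (induction Hs arbitrary: X)
  case empty
  then show ?case by (intro exI[of _ "{#}"]) auto
next
  case (add H Hs)
  then have "image_mset f X = H + \<Sum>\<^sub># Hs" by simp
  then obtain B C where bc: "X = B + C" "H = image_mset f B" "\<Sum>\<^sub># Hs = image_mset f C"
    by (metis image_mset_eq_plusD)
  from add.IH[of C] bc(3) obtain Ps where "C = \<Sum>\<^sub># Ps" "image_mset (image_mset f) Ps = Hs" by metis
  then show ?case using bc by (intro exI[of _ "add_mset B Ps"]) auto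
qed

lemma cz_trans: "cz A N N' \<Longrightarrow> cz A N' N'' \<Longrightarrow> cz A N N''"
proof -
  assume "cz A N N'" "cz A N' N''"
  then obtain Gs Hs where g: "N = \<Sum>\<^sub># Gs" "\<forall>G\<in>#Gs. G \<noteq> {#} \<and> (size G = 1 \<or> sum_mset G \<in> A)"
    "N' = image_mset sum_mset Gs"
    and h: "N' = \<Sum>\<^sub># Hs" "\<forall>G\<in>#Hs. G \<noteq> {#} \<and> (size G = 1 \<or> sum_mset G \<in> A)"
    "N'' = image_mset sum_mset Hs" unfolding cz_def by blast
  obtain Ps where p: "Gs = \<Sum>\<^sub># Ps" "image_mset (image_mset sum_mset) Ps = Hs"
    using split_img[of sum_mset Gs Hs] g(3) h(1) by metis
  define Ks where "Ks = image_mset sum_mset Ps"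
  have "N = \<Sum>\<^sub># Ks" unfolding Ks_def using g(1) p(1) sum_sum[of Ps] by simp
  moreover have "N'' = image_mset sum_mset Ks"
    unfolding Ks_def h(3) p(2)[symmetric] by (simp add: multiset.map_comp comp_def sum_sum)
  moreover have "\<forall>K\<in>#Ks. K \<noteq> {#} \<and> (size K = 1 \<or> sum_mset K \<in> A)"
  proof
    fix K assume "K \<in># Ks"
    then obtain P where P: "P \<in># Ps" "K = \<Sum>\<^sub># P" unfolding Ks_def by auto
    have H: "image_mset sum_mset P \<in># Hs" using P(1) p(2) by auto
    then have hh: "image_mset sum_mset P \<noteq> {#}" "size P = 1 \<or> sum_mset (image_mset sum_mset P) \<in> A"
      using h(2) by auto
    have PG: "\<forall>G\<in>#P. G \<in># Gs" using P(1) p(1)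
      by (metis mset_subset_eqD sum_mset.remove mset_subset_eq_add_left)
    obtain G where "G \<in># P" using hh(1) by auto
    then have "G \<noteq> {#}" "G \<subseteq># K" using PG g(2) P(2)
      by (auto, metis sum_mset.remove mset_subset_eq_add_left)
    then have "K \<noteq> {#}" by auto
    moreover have "size K = 1 \<or> sum_mset K \<in> A"
    proof (cases "size P = 1")
      case True
      then obtain G' where "P = {#G'#}" by (metis size_1_singleton_mset)
      then show ?thesis using P(2) PG g(2) by auto
    next
      case False
      then show ?thesis using hh(2) P(2) sum_sum[of P] by simp
    qed
    ultimately show "K \<noteq> {#} \<and> (size K = 1 \<or> sum_mset K \<in> A)" by blast
  qed
  ultimately show ?thesis unfolding cz_def by blast
qed

definition stp :: "nat \<Rightarrow> nat set \<Rightarrow> nat multiset \<Rightarrow> nat multiset \<Rightarrow> bool" where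
  "stp m A M M' \<longleftrightarrow> size M < m \<and> (\<exists>N0. N0 \<subseteq># M + {#1#} \<and> cz A N0 M')"

lemma stp_main: "(stp m A)\<^sup>*\<^sup>* {#} M \<Longrightarrow> N \<subseteq># M \<Longrightarrow> cz A N N' \<Longrightarrow> agg_reachable m A N'"
proof (induction M arbitrary: N N' rule: rtranclp_induct)
  case base
  then have "N = {#}" by simp
  with base cz_empty have "N' = {#}" by blast
  then show ?case unfolding agg_reachable_def by simp
next
  case (step M M')
  from step.hyps(2) obtain N0 where s: "size M < m" "N0 \<subseteq># M + {#1#}" "cz A N0 M'"
    unfolding stp_def by blast
  from cz_sub[OF s(3) step.prems(1)] obtain N1 where n1: "N1 \<subseteq># N0" "cz A N1 N" by blast
  have c: "cz A N1 N'" using cz_trans[OF n1(2) step.prems(2)] .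
  have sub: "N1 \<subseteq># M + {#1#}" using n1(1) s(2) by (metis subset_mset.order_trans)
  show ?case
  proof (cases "1 \<in># N1")
    case True
    define K where "K = N1 - {#1#}"
    have KN: "K + {#1#} = N1" unfolding K_def using True by simp
    have KM: "K \<subseteq># M" using sub KN by (metis add_mset_add_single mset_subset_eq_add_mset_cancel)
    have rK: "agg_reachable m A K" using step.IH[OF KM cz_refl] .
    have "size K < m" using KM s(1) by (metis le_less_trans size_mset_mono)
    then have "agg_step m A K N'" using cz_step c KN by metis
    then show ?thesis using rK unfolding agg_reachable_def by (metis rtranclp.rtrancl_into_rtrancl)
  next
    case False
    then have "N1 \<subseteq># M" using sub
      by (metis add_mset_add_single diff_single_trivial subset_eq_diff_conv add.commute)
    then show ?thesis using step.IH c by blast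
  qed
qed

lemma reach_stp: "agg_reachable m A M \<Longrightarrow> (stp m A)\<^sup>*\<^sup>* {#} M"
  unfolding agg_reachable_def
proof (induction rule: rtranclp_induct)
  case (step M M')
  then have "stp m A M M'" unfolding stp_def using step_cz by blast
  then show ?case using step.IH by (metis rtranclp.rtrancl_into_rtrancl)
qed simp

lemma closure: "agg_reachable m A M \<Longrightarrow> N \<subseteq># M \<Longrightarrow> cz A N N' \<Longrightarrow> agg_reachable m A N'"
  using stp_main reach_stp by blast

lemma cz_vals: "cz A N N' \<Longrightarrow> \<forall>a\<in>#N. a \<in> A \<Longrightarrow> \<forall>a\<in>#N'. a \<in> A"
proof -
  assume c: "cz A N N'" and v: "\<forall>a\<in>#N. a \<in> A"
  then obtain Gs where g: "N = \<Sum>\<^sub># Gs" "\<forall>G\<in>#Gs. G \<noteq> {#} \<and> (size G = 1 \<or> sum_mset G \<in> A)"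
    "N' = image_mset sum_mset Gs" unfolding cz_def by blast
  show ?thesis
  proof
    fix a assume "a \<in># N'"
    then obtain G where G: "G \<in># Gs" "a = sum_mset G" using g(3) by auto
    have GN: "G \<subseteq># N" using G(1) g(1) by (metis sum_mset.remove mset_subset_eq_add_left)
    show "a \<in> A"
    proof (cases "size G = 1")
      case True
      then obtain b where "G = {#b#}" by (metis size_1_singleton_mset)
      then show ?thesis using G GN v by auto
    next
      case False then show ?thesis using G g(2) by auto
    qed
  qed
qed

lemma reach_vals: "agg_reachable m A M \<Longrightarrow> 1 \<in> A \<Longrightarrow> \<forall>a\<in>#M. a \<in> A"
  unfolding agg_reachable_def
proof (induction rule: rtranclp_induct)
  case (step M M')
  then show ?case using step_cz[OF step.hyps(2)] cz_vals[of A "M + {#1#}" M'] by auto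
qed simp

lemma step_sum: "agg_step m A M M' \<Longrightarrow> sum_mset M' = sum_mset M + 1"
  using step_cz cz_sum by fastforce

lemma reach_tot: "agg_reachable m A M \<Longrightarrow> k \<le> sum_mset M \<Longrightarrow> \<exists>M'. agg_reachable m A M' \<and> sum_mset M' = k"
  unfolding agg_reachable_def
proof (induction arbitrary: k rule: rtranclp_induct)
  case base
  then show ?case by (intro exI[of _ "{#}"]) auto
next
  case (step M M')
  show ?case
  proof (cases "k = sum_mset M'")
    case True
    then show ?thesis using step.hyps by (metis rtranclp.rtrancl_into_rtrancl)
  next
    case False
    then have "k \<le> sum_mset M" using step.prems step_sum[OF step.hyps(2)] by simp
    then show ?thesis using step.IH by blast
  qed
qed

lemma reach_inv: "(agg_step n A)\<^sup>*\<^sup>* {#} M \<Longrightarrow> 1 \<in> A \<Longrightarrow> 0 \<notin> A \<Longrightarrow>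
   M = {#} \<or> (\<exists>a\<in>#M. (stp (n - 1) A)\<^sup>*\<^sup>* {#} (M - {#a#}))"
proof (induction rule: rtranclp_induct)
  case base
  then show ?case by simp
next
  case (step M M')
  have rM': "agg_reachable n A M'" using step.hyps unfolding agg_reachable_def
    by (metis rtranclp.rtrancl_into_rtrancl)
  from step_cz[OF step.hyps(2)] have sz: "size M < n" and c: "cz A (M + {#1#}) M'" by auto
  from c obtain Gs where g: "M + {#1#} = \<Sum>\<^sub># Gs" "\<forall>G\<in>#Gs. G \<noteq> {#} \<and> (size G = 1 \<or> sum_mset G \<in> A)"
    "M' = image_mset sum_mset Gs" unfolding cz_def by blast
  show ?case
  proof (cases "M = {#}")
    case True
    have sM': "sum_mset M' = 1" using cz_sum[OF c] True by simp
    then have "M' \<noteq> {#}" by auto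
    then obtain a where a: "a \<in># M'" by blast
    have pos: "\<forall>b\<in>#M'. b > 0" using reach_vals[OF rM' step.prems(1)] step.prems(2) by (metis gr0I)
    have "sum_mset M' = a + sum_mset (M' - {#a#})" using a by (metis sum_mset.remove)
    moreover have "a > 0" using pos a by auto
    ultimately have "sum_mset (M' - {#a#}) = 0" using sM' by linarith
    moreover have "\<forall>b\<in>#M' - {#a#}. b > 0" using pos by (meson in_diffD)
    ultimately have "M' - {#a#} = {#}"
      by (metis sum_mset_0_iff not_gr0 set_mset_eq_empty_iff ex_in_conv)
    then show ?thesis using a by (metis rtranclp.rtrancl_refl)
  next
    case False
    with step.IH step.prems obtain a where a: "a \<in># M" "(stp (n - 1) A)\<^sup>*\<^sup>* {#} (M - {#a#})" by blast
    have "a \<in># \<Sum>\<^sub># Gs" using g(1) a(1) by (metis union_iff)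
    then obtain G where G: "G \<in># Gs" "a \<in># G" by (metis in_Union_mset_iff)
    have m1: "sum_mset G \<in># M'" using G(1) g(3) by auto
    have e1: "M' - {#sum_mset G#} = image_mset sum_mset (Gs - {#G#})"
      using g(3) G(1) by (simp add: image_mset_Diff)
    have e2: "\<Sum>\<^sub># (Gs - {#G#}) = M + {#1#} - G"
      using g(1) G(1) by (metis sum_mset.remove add_diff_cancel_left')
    have "cz A (\<Sum>\<^sub># (Gs - {#G#})) (M' - {#sum_mset G#})"
      unfolding cz_def e1 using g(2) by (intro exI[of _ "Gs - {#G#}"]) (meson in_diffD)
    moreover have "M + {#1#} - G \<subseteq># (M - {#a#}) + {#1#}"
    proof -
      have "{#a#} \<subseteq># G" using G(2) by simp
      then have "M + {#1#} - G \<subseteq># M + {#1#} - {#a#}" by (metis diff_subset_eq_self subset_mset.add_diff_inverse diff_diff_add)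
      moreover have "M + {#1#} - {#a#} = (M - {#a#}) + {#1#}" using a(1) by simp
      ultimately show ?thesis by simp
    qed
    moreover have "size M > 0" using a(1) by (metis gr0I size_eq_0_iff_empty empty_iff set_mset_empty)
    then have "size (M - {#a#}) < n - 1" using sz a(1) by (simp add: size_Diff_singleton)
    ultimately have "stp (n - 1) A (M - {#a#}) (M' - {#sum_mset G#})" unfolding stp_def e2 by blast
    then show ?thesis using a(2) m1 by (metis rtranclp.rtrancl_into_rtrancl)
  qed
qed

lemma cz_add_single: "cz A N N' \<Longrightarrow> cz A (N + {#y#}) (N' + {#y#})"
  unfolding cz_def
proof (elim exE conjE)
  fix Gs assume g: "N = \<Sum>\<^sub># Gs" "\<forall>G\<in>#Gs. G \<noteq> {#} \<and> (size G = 1 \<or> sum_mset G \<in> A)"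
    "N' = image_mset sum_mset Gs"
  show "\<exists>Gs. N + {#y#} = \<Sum>\<^sub># Gs \<and> (\<forall>G\<in>#Gs. G \<noteq> {#} \<and> (size G = 1 \<or> sum_mset G \<in> A)) \<and> N' + {#y#} = image_mset sum_mset Gs"
    using g by (intro exI[of _ "add_mset {#y#} Gs"]) auto
qed

lemma lift: "agg_reachable (n - 1) A Q \<Longrightarrow> agg_reachable n A {#y#} \<Longrightarrow> agg_reachable n A (Q + {#y#})"
  unfolding agg_reachable_def
proof (induction rule: rtranclp_induct)
  case (step Q Q')
  from step_cz[OF step.hyps(2)] have "size Q < n - 1" "cz A (Q + {#1#}) Q'" by auto
  then have "agg_step n A (Q + {#y#}) (Q' + {#y#})"
    using cz_step[of "Q + {#y#}" n A "Q' + {#y#}"] cz_add_single[of A "Q + {#1#}" Q' y]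
    by (simp add: add.commute add.left_commute)
  then show ?case using step by (metis rtranclp.rtrancl_into_rtrancl)
qed simp

theorem lemma2:
  fixes A :: "nat set" and x y n :: nat
  assumes "0 \<notin> A" and "1 \<in> A"
    and "x \<in> A" and "x > 1"
    and "y \<in> A" and "y < x" and "\<forall>a\<in>A. a < x \<longrightarrow> a \<le> y"
    and "n \<ge> 1"
  shows "agg_reachable n A {#x#} \<longleftrightarrow>
           (agg_reachable n A {#y#} \<and>
            (\<exists>P. agg_reachable (n - 1) A P \<and> sum_mset P = x - y))"
proof
  assume rx: "agg_reachable n A {#x#}"
  have y0: "y > 0" using assms(1,5) by (metis gr0I)
  obtain M where M: "agg_reachable n A M" "sum_mset M = y" using reach_tot[OF rx, of y] assms(6) by auto
  have "M \<noteq> {#}" using M(2) y0 by auto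
  then have "cz A M {#y#}" unfolding cz_def using M(2) assms(5)
    by (intro exI[of _ "{#M#}"]) auto
  then have r1: "agg_reachable n A {#y#}" using closure[OF M(1)] by blast
  have "(agg_step n A)\<^sup>*\<^sup>* {#} {#x#}" using rx unfolding agg_reachable_def .
  then obtain Q where Q: "(agg_step n A)\<^sup>*\<^sup>* {#} Q" "agg_step n A Q {#x#}"
    by (cases rule: rtranclp.cases) auto
  have sQ: "sum_mset Q + 1 = x" using step_sum[OF Q(2)] by simp
  have "size Q < n" using step_cz[OF Q(2)] by auto
  then have "agg_step n A Q (Q + {#1#})" using cz_step cz_refl by blast
  then have rQ1: "(agg_step n A)\<^sup>*\<^sup>* {#} (Q + {#1#})" using Q(1) by (metis rtranclp.rtrancl_into_rtrancl)
  obtain a where a: "a \<in># Q + {#1#}" "(stp (n - 1) A)\<^sup>*\<^sup>* {#} (Q + {#1#} - {#a#})"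
  proof -
    have "Q + {#1#} \<noteq> {#}" by simp
    then show ?thesis using reach_inv[OF rQ1 assms(2,1)] that by blast
  qed
  have rP: "agg_reachable (n - 1) A (Q + {#1#} - {#a#})" using stp_main[OF a(2) _ cz_refl] by blast
  have aA: "a \<in> A" using reach_vals[OF rQ1[folded agg_reachable_def] assms(2)] a(1) by blast
  have ssum: "a + sum_mset (Q + {#1#} - {#a#}) = x" using a(1) sQ by (metis sum_mset.remove add.commute sum_mset.add_mset add_mset_add_single)
  have "a < x"
  proof (cases "a = 1")
    case True then show ?thesis using assms(4) by simp
  next
    case False
    then have "1 \<in># Q + {#1#} - {#a#}" by (simp add: in_diff_count)
    then have "sum_mset (Q + {#1#} - {#a#}) \<ge> 1" by (metis sum_mset.remove le_add1)
    then show ?thesis using ssum by linarith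
  qed
  then have "a \<le> y" using assms(7) aA by blast
  then have "x - y \<le> sum_mset (Q + {#1#} - {#a#})" using ssum by linarith
  then show "agg_reachable n A {#y#} \<and> (\<exists>P. agg_reachable (n - 1) A P \<and> sum_mset P = x - y)"
    using reach_tot[OF rP] r1 by blast
next
  assume "agg_reachable n A {#y#} \<and> (\<exists>P. agg_reachable (n - 1) A P \<and> sum_mset P = x - y)"
  then obtain P where r1: "agg_reachable n A {#y#}" and P: "agg_reachable (n - 1) A P" "sum_mset P = x - y" by blast
  have "P \<noteq> {#}" using P(2) assms(6) by auto
  then obtain Q where Q: "agg_reachable (n - 1) A Q" "agg_step (n - 1) A Q P"
    using P(1) unfolding agg_reachable_def by (metis rtranclp.cases)
  have sQ: "sum_mset Q + 1 = x - y" using step_sum[OF Q(2)] P(2) by simp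
  have rQy: "agg_reachable n A (Q + {#y#})" using lift[OF Q(1) r1] .
  have "size Q < n - 1" using step_cz[OF Q(2)] by auto
  then have sz: "size (Q + {#y#}) < n" by simp
  have "Suc (y + sum_mset Q) = x" using sQ assms(6) by linarith
  then have "cz A (Q + {#y#} + {#1#}) {#x#}" unfolding cz_def using assms(3)
    by (intro exI[of _ "{#Q + {#y#} + {#1#}#}"]) auto
  then have "agg_step n A (Q + {#y#}) {#x#}" using cz_step sz by blast
  then show "agg_reachable n A {#x#}" using rQy unfolding agg_reachable_def
    by (metis rtranclp.rtrancl_into_rtrancl)
qed

end
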